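(* Let $\alpha\in\ell^2$, $\epsilon>0$ and $N\ge1$ an integer, and suppose that the $(\epsilon,L)$-sequence associated with $\alpha$ and $\epsilon$ has length at least $N$, i.e. $c_N<\infty$. Then $a_N(R_\alpha)\ge\epsilon/\sqrt2$.
   Context: $\mathbb{N}=\{0,1,2,\dots\}$; $\ell^2$ is the space of square-summable functions $\mathbb{N}\to\mathbb{C}$; $(R_\alpha f)(k)=\alpha_k\sum_{j=0}^kf(j)$. Approximation numbers: $a_{n+1}(T)=\inf\{\|T-P\|:P$ linear on $\ell^2$ with rank $\le n\}$. For a finite natural interval $I$: $\mu(I)=\sum_{k\in I}|\alpha_k|^2$, $\|f\|_{2,I}=(\sum_{k\in I}|f(k)|^2)^{1/2}$, $l(I,f)=\sum_{k\in I}\sum_{n\in I\setminus\{k\}}|\alpha_k\alpha_n\sum_{j=\min(k,n)+1}^{\max(k,n)}f(j)|^2$, $L(I)=(\sup_{\|f\|_{2,I}\le1}l(I,f)/\mu(I))^{1/2}$ (sup over $f$ supported in $I$; $L(I)=0$ if $\alpha$ vanishes on $I$). $(\epsilon,L)$-sequence: $c_0=0$, $c_{k+1}=\inf\{t\in\mathbb{N}:t>c_k,\ L([c_k,t-1])>\epsilon\}$ ($\inf\emptyset=+\infty$). *)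

theory Defs
  imports "HOL-Analysis.Analysis" "HOL-Library.Extended_Nat"
begin

definition l2 :: "(nat \<Rightarrow> complex) set" where
  "l2 = {f. summable (\<lambda>k. (cmod (f k))\<^sup>2)}"

text \<open>The l2 norm, with value infinity for non-square-summable sequences.\<close>
definition l2norm :: "(nat \<Rightarrow> complex) \<Rightarrow> ennreal" where
  "l2norm g = (SUP n. ennreal (sqrt (\<Sum>k<n. (cmod (g k))\<^sup>2)))"

definition opnorm :: "((nat \<Rightarrow> complex) \<Rightarrow> (nat \<Rightarrow> complex)) \<Rightarrow> ennreal" where
  "opnorm T = (SUP f \<in> {f \<in> l2. l2norm f \<le> 1}. l2norm (T f))"

definition linear_l2 :: "((nat \<Rightarrow> complex) \<Rightarrow> (nat \<Rightarrow> complex)) \<Rightarrow> bool" where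
  "linear_l2 P \<longleftrightarrow>
     (\<forall>f\<in>l2. \<forall>g\<in>l2. P (\<lambda>k. f k + g k) = (\<lambda>k. P f k + P g k)) \<and>
     (\<forall>f\<in>l2. \<forall>c::complex. P (\<lambda>k. c * f k) = (\<lambda>k. c * P f k))"

definition rank_le :: "((nat \<Rightarrow> complex) \<Rightarrow> (nat \<Rightarrow> complex)) \<Rightarrow> nat \<Rightarrow> bool" where
  "rank_le P n \<longleftrightarrow> (\<exists>g :: nat \<Rightarrow> nat \<Rightarrow> complex. (\<forall>i<n. g i \<in> l2) \<and>
     (\<forall>f\<in>l2. \<exists>c :: nat \<Rightarrow> complex. P f = (\<lambda>k. \<Sum>i<n. c i * g i k)))"

text \<open>Approximation numbers: a (n+1) T = inf of norm (T - P) over P of rank at most n.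
  Only meaningful for N \<ge> 1.\<close>
definition approx_num :: "((nat \<Rightarrow> complex) \<Rightarrow> (nat \<Rightarrow> complex)) \<Rightarrow> nat \<Rightarrow> ennreal" where
  "approx_num T N = (INF P \<in> {P. linear_l2 P \<and> rank_le P (N - 1)}.
       opnorm (\<lambda>f k. T f k - P f k))"

definition R_op :: "(nat \<Rightarrow> complex) \<Rightarrow> (nat \<Rightarrow> complex) \<Rightarrow> (nat \<Rightarrow> complex)" where
  "R_op \<alpha> f = (\<lambda>k. \<alpha> k * (\<Sum>j\<le>k. f j))"

definition mu :: "(nat \<Rightarrow> complex) \<Rightarrow> nat \<Rightarrow> nat \<Rightarrow> real" where
  "mu \<alpha> a b = (\<Sum>k\<in>{a..b}. (cmod (\<alpha> k))\<^sup>2)"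

definition lI :: "(nat \<Rightarrow> complex) \<Rightarrow> nat \<Rightarrow> nat \<Rightarrow> (nat \<Rightarrow> complex) \<Rightarrow> real" where
  "lI \<alpha> a b f = (\<Sum>k\<in>{a..b}. \<Sum>n\<in>{a..b} - {k}.
      (cmod (\<alpha> k * \<alpha> n * (\<Sum>j\<in>{min k n + 1..max k n}. f j)))\<^sup>2)"

definition LI :: "(nat \<Rightarrow> complex) \<Rightarrow> nat \<Rightarrow> nat \<Rightarrow> real" where
  "LI \<alpha> a b = (if mu \<alpha> a b = 0 then 0 else
     sqrt (Sup {lI \<alpha> a b f / mu \<alpha> a b | f.
        (\<forall>k. k \<notin> {a..b} \<longrightarrow> f k = 0) \<and> (\<Sum>k\<in>{a..b}. (cmod (f k))\<^sup>2) \<le> 1}))"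

text \<open>The (epsilon,L)-sequence; infinity encodes inf of the empty set.\<close>
primrec eLseq :: "(nat \<Rightarrow> complex) \<Rightarrow> real \<Rightarrow> nat \<Rightarrow> enat" where
  "eLseq \<alpha> \<epsilon> 0 = 0"
| "eLseq \<alpha> \<epsilon> (Suc m) = (case eLseq \<alpha> \<epsilon> m of
      \<infinity> \<Rightarrow> \<infinity>
    | enat c \<Rightarrow> (if \<exists>t. t > c \<and> LI \<alpha> c (t - 1) > \<epsilon>
                 then enat (LEAST t. t > c \<and> LI \<alpha> c (t - 1) > \<epsilon>) else \<infinity>))"

end

theory Submission imports Defs begin

lemma exists_kernel:
  fixes a :: "nat \<Rightarrow> nat \<Rightarrow> complex"
  shows "finite S \<Longrightarrow> card S > M \<Longrightarrow> \<exists>c. (\<exists>i\<in>S. c i \<noteq> 0) \<and> (\<forall>m<M. (\<Sum>i\<in>S. c i * a i m) = 0)"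
proof (induction M arbitrary: S a)
  case 0
  then obtain i where "i \<in> S" by (metis card.empty card_gt_0_iff equals0I)
  then show ?case by (intro exI[of _ "\<lambda>_. 1"]) auto
next
  case (Suc M)
  show ?case
  proof (cases "\<forall>i\<in>S. a i M = 0")
    case True
    from Suc.IH[of S a] Suc.prems obtain c where c: "\<exists>i\<in>S. c i \<noteq> 0" "\<forall>m<M. (\<Sum>i\<in>S. c i * a i m) = 0" by auto
    have "\<forall>m<Suc M. (\<Sum>i\<in>S. c i * a i m) = 0"
      using c(2) True by (auto simp: less_Suc_eq)
    with c(1) show ?thesis by blast
  next
    case False
    then obtain i0 where i0: "i0 \<in> S" "a i0 M \<noteq> 0" by auto
    define S' where "S' = S - {i0}"
    define b where "b i m = a i m - a i M / a i0 M * a i0 m" for i m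
    have fin: "finite S'" using Suc.prems by (simp add: S'_def)
    have cS: "card S' > M" using Suc.prems i0 by (simp add: S'_def)
    from Suc.IH[OF fin cS, of b] obtain c' where c': "\<exists>i\<in>S'. c' i \<noteq> 0" "\<forall>m<M. (\<Sum>i\<in>S'. c' i * b i m) = 0" by auto
    define c where "c i = (if i = i0 then -(\<Sum>j\<in>S'. c' j * a j M) / a i0 M else c' i)" for i
    have spl: "(\<Sum>i\<in>S. c i * a i m) = c i0 * a i0 m + (\<Sum>i\<in>S'. c' i * a i m)" for m
    proof -
      have "(\<Sum>i\<in>S. c i * a i m) = c i0 * a i0 m + (\<Sum>i\<in>S'. c i * a i m)"
        using i0 Suc.prems(1) by (simp add: S'_def sum.remove)
      also have "(\<Sum>i\<in>S'. c i * a i m) = (\<Sum>i\<in>S'. c' i * a i m)"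
        by (rule sum.cong) (auto simp: c_def S'_def)
      finally show ?thesis .
    qed
    have "\<forall>m<Suc M. (\<Sum>i\<in>S. c i * a i m) = 0"
    proof (intro allI impI)
      fix m assume m: "m < Suc M"
      show "(\<Sum>i\<in>S. c i * a i m) = 0"
      proof (cases "m = M")
        case True
        show ?thesis unfolding True spl using i0 by (simp add: c_def)
      next
        case False
        with m have mM: "m < M" by simp
        have "(\<Sum>i\<in>S'. c' i * a i m) = (\<Sum>i\<in>S'. c' i * b i m + (c' i * a i M) * (a i0 m / a i0 M))"
          by (rule sum.cong) (auto simp: b_def field_simps i0)
        also have "\<dots> = (\<Sum>j\<in>S'. c' j * a j M) * (a i0 m / a i0 M)"
          using c'(2) mM by (simp add: sum.distrib sum_distrib_right sum_divide_distrib)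
        finally show ?thesis unfolding spl using i0 by (simp add: c_def field_simps)
      qed
    qed
    moreover have "\<exists>i\<in>S. c i \<noteq> 0" using c'(1) by (auto simp: c_def S'_def)
    ultimately show ?thesis by blast
  qed
qed

lemma lagrange:
  fixes x al :: "nat \<Rightarrow> complex"
  assumes "finite I"
  shows "(\<Sum>k\<in>I. \<Sum>n\<in>I. (cmod (al n * x k - al k * x n))\<^sup>2)
      \<le> 2 * (\<Sum>k\<in>I. (cmod (al k))\<^sup>2) * (\<Sum>k\<in>I. (cmod (x k))\<^sup>2)"
proof -
  define A where "A k = al k * cnj (al k)" for k
  define X where "X k = x k * cnj (x k)" for k
  define p where "p k = x k * cnj (al k)" for k
  define cp where "cp k = cnj (p k)" for k
  define z where "z = (\<Sum>k\<in>I. p k)"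
  have trm: "complex_of_real ((cmod (al n * x k - al k * x n))\<^sup>2)
     = X k * A n + A k * X n - p k * cp n - cp k * p n" for k n
    unfolding complex_norm_square A_def X_def p_def cp_def by (simp add: algebra_simps)
  have "complex_of_real (\<Sum>k\<in>I. \<Sum>n\<in>I. (cmod (al n * x k - al k * x n))\<^sup>2)
     = (\<Sum>k\<in>I. \<Sum>n\<in>I. X k * A n + A k * X n - p k * cp n - cp k * p n)"
    by (simp only: of_real_sum trm)
  also have "\<dots> = (\<Sum>k\<in>I. X k) * (\<Sum>k\<in>I. A k) + (\<Sum>k\<in>I. A k) * (\<Sum>k\<in>I. X k)
       - (\<Sum>k\<in>I. p k) * (\<Sum>k\<in>I. cp k) - (\<Sum>k\<in>I. cp k) * (\<Sum>k\<in>I. p k)"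
    by (simp only: sum.distrib sum_subtractf sum_product)
  also have "\<dots> = complex_of_real (2 * (\<Sum>k\<in>I. (cmod (al k))\<^sup>2) * (\<Sum>k\<in>I. (cmod (x k))\<^sup>2) - 2 * (cmod z)\<^sup>2)"
  proof -
    have eA: "(\<Sum>k\<in>I. A k) = complex_of_real (\<Sum>k\<in>I. (cmod (al k))\<^sup>2)"
      unfolding of_real_sum A_def complex_norm_square ..
    have eX: "(\<Sum>k\<in>I. X k) = complex_of_real (\<Sum>k\<in>I. (cmod (x k))\<^sup>2)"
      unfolding of_real_sum X_def complex_norm_square ..
    have ecp: "(\<Sum>k\<in>I. cp k) = cnj z" unfolding cp_def z_def cnj_sum ..
    have ez: "z * cnj z = complex_of_real ((cmod z)\<^sup>2)" unfolding complex_norm_square ..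
    show ?thesis unfolding eA eX ecp z_def[symmetric]
      by (simp only: ez of_real_mult of_real_diff of_real_numeral mult.commute[of "cnj z" z]) (simp add: algebra_simps)
  qed
  finally have "(\<Sum>k\<in>I. \<Sum>n\<in>I. (cmod (al n * x k - al k * x n))\<^sup>2) = 2 * (\<Sum>k\<in>I. (cmod (al k))\<^sup>2) * (\<Sum>k\<in>I. (cmod (x k))\<^sup>2) - 2 * (cmod z)\<^sup>2"
    using of_real_eq_iff by blast
  then show ?thesis by simp
qed


lemma sum_split_le:
  fixes f :: "nat \<Rightarrow> complex"
  assumes "k \<le> n"
  shows "(\<Sum>j\<in>{k+1..n}. f j) = (\<Sum>j\<le>n. f j) - (\<Sum>j\<le>k. f j)"
proof -
  have "{..n} = {..k} \<union> {k+1..n}" using assms by auto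
  then have "(\<Sum>j\<le>n. f j) = (\<Sum>j\<le>k. f j) + (\<Sum>j\<in>{k+1..n}. f j)"
    by (simp add: sum.union_disjoint ivl_disj_int)
  then show ?thesis by simp
qed

lemma lI_term:
  "cmod (\<alpha> k * \<alpha> n * (\<Sum>j\<in>{min k n + 1..max k n}. f j))
   = cmod (\<alpha> n * R_op \<alpha> f k - \<alpha> k * R_op \<alpha> f n)"
proof (cases "k \<le> n")
  case True
  have e: "(\<Sum>j\<in>{min k n + 1..max k n}. f j) = (\<Sum>j\<le>n. f j) - (\<Sum>j\<le>k. f j)"
    using True sum_split_le[of k n f] by (simp add: min_def max_def)
  have "\<alpha> k * \<alpha> n * (\<Sum>j\<in>{min k n + 1..max k n}. f j) = - (\<alpha> n * R_op \<alpha> f k - \<alpha> k * R_op \<alpha> f n)"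
    unfolding e R_op_def by (simp add: algebra_simps)
  then show ?thesis by (metis norm_minus_cancel)
next
  case False
  have e: "(\<Sum>j\<in>{min k n + 1..max k n}. f j) = (\<Sum>j\<le>k. f j) - (\<Sum>j\<le>n. f j)"
    using False sum_split_le[of n k f] by (simp add: min_def max_def)
  have "\<alpha> k * \<alpha> n * (\<Sum>j\<in>{min k n + 1..max k n}. f j) = (\<alpha> n * R_op \<alpha> f k - \<alpha> k * R_op \<alpha> f n)"
    unfolding e R_op_def by (simp add: algebra_simps)
  then show ?thesis by simp
qed

lemma lI_bound:
  "lI \<alpha> a b f \<le> 2 * mu \<alpha> a b * (\<Sum>k\<in>{a..b}. (cmod (R_op \<alpha> f k))\<^sup>2)"
proof -
  have "lI \<alpha> a b f = (\<Sum>k\<in>{a..b}. \<Sum>n\<in>{a..b} - {k}. (cmod (\<alpha> n * R_op \<alpha> f k - \<alpha> k * R_op \<alpha> f n))\<^sup>2)"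
    unfolding lI_def lI_term ..
  also have "\<dots> \<le> (\<Sum>k\<in>{a..b}. \<Sum>n\<in>{a..b}. (cmod (\<alpha> n * R_op \<alpha> f k - \<alpha> k * R_op \<alpha> f n))\<^sup>2)"
    by (intro sum_mono sum_mono2) auto
  also have "\<dots> \<le> 2 * mu \<alpha> a b * (\<Sum>k\<in>{a..b}. (cmod (R_op \<alpha> f k))\<^sup>2)"
    unfolding mu_def by (rule lagrange) simp
  finally show ?thesis .
qed

lemma lI_scale:
  assumes "\<forall>k\<in>{a..b}. f k = c * h k"
  shows "lI \<alpha> a b f = (cmod c)\<^sup>2 * lI \<alpha> a b h"
proof -
  have t: "(cmod (\<alpha> k * \<alpha> n * (\<Sum>j\<in>{min k n + 1..max k n}. f j)))\<^sup>2
     = (cmod c)\<^sup>2 * (cmod (\<alpha> k * \<alpha> n * (\<Sum>j\<in>{min k n + 1..max k n}. h j)))\<^sup>2"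
    if "k \<in> {a..b}" "n \<in> {a..b}" for k n
  proof -
    have "(\<Sum>j\<in>{min k n + 1..max k n}. f j) = (\<Sum>j\<in>{min k n + 1..max k n}. c * h j)"
    proof (rule sum.cong[OF refl])
      fix j assume "j \<in> {min k n + 1..max k n}"
      then have "j \<in> {a..b}" using that by (auto simp: min_def max_def split: if_splits)
      then show "f j = c * h j" using assms by blast
    qed
    then have "\<alpha> k * \<alpha> n * (\<Sum>j\<in>{min k n + 1..max k n}. f j) = c * (\<alpha> k * \<alpha> n * (\<Sum>j\<in>{min k n + 1..max k n}. h j))"
      by (simp add: sum_distrib_left[symmetric] algebra_simps)
    then show ?thesis by (simp only: norm_mult power_mult_distrib)
  qed
  have "lI \<alpha> a b f = (\<Sum>k\<in>{a..b}. \<Sum>n\<in>{a..b} - {k}. (cmod c)\<^sup>2 * (cmod (\<alpha> k * \<alpha> n * (\<Sum>j\<in>{min k n + 1..max k n}. h j)))\<^sup>2)"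
    unfolding lI_def by (intro sum.cong refl) (use t in auto)
  also have "\<dots> = (cmod c)\<^sup>2 * lI \<alpha> a b h"
    unfolding lI_def by (simp add: sum_distrib_left)
  finally show ?thesis .
qed

lemma eLseq_fin_down: "eLseq \<alpha> \<epsilon> (Suc m) \<noteq> \<infinity> \<Longrightarrow> eLseq \<alpha> \<epsilon> m \<noteq> \<infinity>"
  by (auto split: enat.splits)

lemma eLseq_fin: "eLseq \<alpha> \<epsilon> N \<noteq> \<infinity> \<Longrightarrow> m \<le> N \<Longrightarrow> eLseq \<alpha> \<epsilon> m \<noteq> \<infinity>"
proof (induction N)
  case 0 then show ?case by simp
next
  case (Suc N) then show ?case using eLseq_fin_down le_Suc_eq by blast
qed

lemma eLseq_props:
  assumes "eLseq \<alpha> \<epsilon> N < \<infinity>"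
  shows "\<exists>c. c 0 = 0 \<and> (\<forall>m<N. c m < c (Suc m) \<and> LI \<alpha> (c m) (c (Suc m) - 1) > \<epsilon>)"
proof -
  define c where "c m = the_enat (eLseq \<alpha> \<epsilon> m)" for m
  have fin: "eLseq \<alpha> \<epsilon> m = enat (c m)" if "m \<le> N" for m
    using eLseq_fin[of \<alpha> \<epsilon> N m] that assms by (auto simp: c_def)
  have "c m < c (Suc m) \<and> LI \<alpha> (c m) (c (Suc m) - 1) > \<epsilon>" if "m < N" for m
  proof -
    have e1: "eLseq \<alpha> \<epsilon> m = enat (c m)" by (rule fin) (use that in simp)
    have e2: "eLseq \<alpha> \<epsilon> (Suc m) = enat (c (Suc m))" by (rule fin) (use that in simp)
    have eq: "eLseq \<alpha> \<epsilon> (Suc m) = (if \<exists>t. t > c m \<and> LI \<alpha> (c m) (t - 1) > \<epsilon>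
        then enat (LEAST t. t > c m \<and> LI \<alpha> (c m) (t - 1) > \<epsilon>) else \<infinity>)"
      by (simp only: eLseq.simps e1 enat.case)
    have ex: "\<exists>t. t > c m \<and> LI \<alpha> (c m) (t - 1) > \<epsilon>"
    proof (rule ccontr)
      assume na: "\<not> ?thesis"
      have "eLseq \<alpha> \<epsilon> (Suc m) = \<infinity>" using eq unfolding if_not_P[OF na] .
      then show False using e2 by simp
    qed
    have "eLseq \<alpha> \<epsilon> (Suc m) = enat (LEAST t. t > c m \<and> LI \<alpha> (c m) (t - 1) > \<epsilon>)"
      using eq unfolding if_P[OF ex] .
    then have "c (Suc m) = (LEAST t. t > c m \<and> LI \<alpha> (c m) (t - 1) > \<epsilon>)"
      using e2 by simp
    then show ?thesis using LeastI_ex[OF ex] by simp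
  qed
  moreover have "c 0 = 0" by (simp add: c_def zero_enat_def)
  ultimately show ?thesis by blast
qed

lemma choose_f:
  assumes "LI \<alpha> a b > \<epsilon>" "\<epsilon> > 0"
  shows "\<exists>f. (\<forall>k. k \<notin> {a..b} \<longrightarrow> f k = 0) \<and> (\<Sum>k\<in>{a..b}. (cmod (f k))\<^sup>2) \<le> 1
     \<and> lI \<alpha> a b f > \<epsilon>\<^sup>2 * mu \<alpha> a b \<and> mu \<alpha> a b > 0"
proof -
  have mu0: "mu \<alpha> a b \<noteq> 0" using assms by (auto simp: LI_def)
  have "mu \<alpha> a b \<ge> 0" unfolding mu_def by (intro sum_nonneg) auto
  with mu0 have mup: "mu \<alpha> a b > 0" by simp
  define S where "S = {lI \<alpha> a b f / mu \<alpha> a b | f.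
        (\<forall>k. k \<notin> {a..b} \<longrightarrow> f k = 0) \<and> (\<Sum>k\<in>{a..b}. (cmod (f k))\<^sup>2) \<le> 1}"
  have "sqrt (Sup S) > \<epsilon>" using assms mu0 by (simp add: LI_def S_def)
  then have supg: "Sup S > \<epsilon>\<^sup>2"
    using assms(2) by (metis real_le_lsqrt less_eq_real_def not_le real_sqrt_le_0_iff order_le_less_trans zero_le_power2 power2_eq_square real_sqrt_le_iff real_sqrt_abs abs_of_pos)
  have "(0::real) \<in> S" unfolding S_def by (rule CollectI, rule exI[of _ "\<lambda>_. 0"]) (simp add: lI_def)
  then have ne: "S \<noteq> {}" by auto
  have "\<exists>x\<in>S. x > \<epsilon>\<^sup>2"
  proof (cases "bdd_above S")
    case True then show ?thesis using supg less_cSup_iff[OF ne True] by blast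
  next
    case False then show ?thesis unfolding bdd_above_def by (meson not_le_imp_less)
  qed
  then obtain f where f: "(\<forall>k. k \<notin> {a..b} \<longrightarrow> f k = 0)" "(\<Sum>k\<in>{a..b}. (cmod (f k))\<^sup>2) \<le> 1"
    "lI \<alpha> a b f / mu \<alpha> a b > \<epsilon>\<^sup>2" unfolding S_def by auto
  then have "lI \<alpha> a b f > \<epsilon>\<^sup>2 * mu \<alpha> a b" using mup by (simp add: pos_less_divide_eq)
  with f mup show ?thesis by blast
qed


lemma mono_steps:
  assumes "\<forall>m<N. (c::nat\<Rightarrow>nat) m < c (Suc m)"
  shows "i < j \<Longrightarrow> j \<le> N \<Longrightarrow> c (Suc i) \<le> c j"
proof (induction j)
  case 0 then show ?case by simp
next
  case (Suc j)
  then show ?case using assms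
    by (metis Suc_leD le_less_Suc_eq less_Suc_eq_le nless_le order.strict_trans1 verit_comp_simplify1(3))
qed

lemma mono_le0:
  assumes "\<forall>m<N. (c::nat\<Rightarrow>nat) m < c (Suc m)"
  shows "j \<le> N \<Longrightarrow> c 0 \<le> c j"
proof (cases j)
  case 0 then show ?thesis by simp
next
  case (Suc i)
  assume jN: "j \<le> N"
  have "c (Suc 0) \<le> c j" using mono_steps[OF assms, of 0 j] Suc jN by simp
  moreover have "c 0 < c (Suc 0)" using assms Suc jN by auto
  ultimately show ?thesis by simp
qed

lemma sum_blocks:
  assumes "\<forall>m<N. (c::nat\<Rightarrow>nat) m < c (Suc m)"
  shows "(\<Sum>j<N. \<Sum>k\<in>{c j..<c (Suc j)}. h k) = (\<Sum>k\<in>{c 0..<c N}. (h k :: real))"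
  using assms
proof (induction N)
  case 0 then show ?case by simp
next
  case (Suc N)
  have "c 0 \<le> c N" using mono_le0[of "Suc N" c N] Suc.prems by simp
  moreover have "c N \<le> c (Suc N)" using Suc.prems by (simp add: less_imp_le)
  ultimately show ?case using Suc by (simp add: sum.atLeastLessThan_concat)
qed

lemma l2_add: "f \<in> l2 \<Longrightarrow> g \<in> l2 \<Longrightarrow> (\<lambda>k. f k + g k) \<in> l2"
  unfolding l2_def
proof safe
  assume f: "summable (\<lambda>k. (cmod (f k))\<^sup>2)" and g: "summable (\<lambda>k. (cmod (g k))\<^sup>2)"
  have b: "norm ((cmod (f k + g k))\<^sup>2) \<le> 2 * (cmod (f k))\<^sup>2 + 2 * (cmod (g k))\<^sup>2" for k
  proof -
    have "cmod (f k + g k) \<le> cmod (f k) + cmod (g k)" by (rule norm_triangle_ineq)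
    then have "(cmod (f k + g k))\<^sup>2 \<le> (cmod (f k) + cmod (g k))\<^sup>2" by (simp add: power_mono)
    also have "\<dots> \<le> 2 * (cmod (f k))\<^sup>2 + 2 * (cmod (g k))\<^sup>2"
      by (smt (verit) sum_squares_bound zero_le_power2 power2_sum)
    finally show ?thesis by simp
  qed
  show "summable (\<lambda>k. (cmod (f k + g k))\<^sup>2)"
    by (rule summable_comparison_test[OF _ summable_add[OF summable_mult[OF f] summable_mult[OF g]]])
       (use b in auto)
qed

lemma l2_scale: "f \<in> l2 \<Longrightarrow> (\<lambda>k. c * f k) \<in> l2"
  unfolding l2_def by (simp add: norm_mult power_mult_distrib summable_mult)

lemma l2_zero: "(\<lambda>k. 0) \<in> l2"
  unfolding l2_def by simp

lemma l2_sum: "finite S \<Longrightarrow> (\<forall>i\<in>S. h i \<in> l2) \<Longrightarrow> (\<lambda>k. \<Sum>i\<in>S. d i * h i k) \<in> l2"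
proof (induction S rule: finite_induct)
  case empty then show ?case by (simp add: l2_zero)
next
  case (insert x F)
  then show ?case using l2_add[OF l2_scale[of "h x" "d x"] insert.IH] by simp
qed

lemma lin_sum:
  assumes "linear_l2 P"
  shows "finite S \<Longrightarrow> (\<forall>i\<in>S. h i \<in> l2) \<Longrightarrow> P (\<lambda>k. \<Sum>i\<in>S. d i * h i k) = (\<lambda>k. \<Sum>i\<in>S. d i * P (h i) k)"
proof (induction S rule: finite_induct)
  case empty
  have "\<forall>f\<in>l2. \<forall>c. P (\<lambda>k. c * f k) = (\<lambda>k. c * P f k)"
    using assms unfolding linear_l2_def by blast
  from this[rule_format, OF l2_zero, of 0]
  have "P (\<lambda>k. 0 * 0) = (\<lambda>k. 0 * P (\<lambda>k. 0) k)" by simp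
  then show ?case by simp
next
  case (insert x F)
  have hx: "h x \<in> l2" using insert by simp
  have sF: "(\<lambda>k. \<Sum>i\<in>F. d i * h i k) \<in> l2" using l2_sum[of F h d] insert by simp
  have "P (\<lambda>k. \<Sum>i\<in>insert x F. d i * h i k) = P (\<lambda>k. d x * h x k + (\<Sum>i\<in>F. d i * h i k))"
    using insert by simp
  also have "\<dots> = (\<lambda>k. P (\<lambda>k. d x * h x k) k + P (\<lambda>k. \<Sum>i\<in>F. d i * h i k) k)"
  proof -
    have add: "\<forall>f\<in>l2. \<forall>g\<in>l2. P (\<lambda>k. f k + g k) = (\<lambda>k. P f k + P g k)"
      using assms unfolding linear_l2_def by blast
    show ?thesis using add[rule_format, OF l2_scale[OF hx, of "d x"] sF] by simp
  qed
  also have "P (\<lambda>k. d x * h x k) = (\<lambda>k. d x * P (h x) k)"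
  proof -
    have hom: "\<forall>f\<in>l2. \<forall>c. P (\<lambda>k. c * f k) = (\<lambda>k. c * P f k)"
      using assms unfolding linear_l2_def by blast
    show ?thesis using hom[rule_format, OF hx, of "d x"] by simp
  qed
  finally show ?case using insert by simp
qed

lemma sum_le_tail:
  fixes h :: "nat \<Rightarrow> real"
  assumes "\<And>k. h k \<ge> 0" "\<And>k. k \<ge> C \<Longrightarrow> h k = 0"
  shows "(\<Sum>k<n. h k) \<le> (\<Sum>k<C. h k)"
proof (cases "n \<le> C")
  case True then show ?thesis by (intro sum_mono2) (auto simp: assms)
next
  case False
  then have "(\<Sum>k<n. h k) = (\<Sum>k<C. h k)"
    by (intro sum.mono_neutral_right) (auto simp: assms)
  then show ?thesis by simp
qed


theorem lemma4p3:
  fixes \<alpha> :: "nat \<Rightarrow> complex" and \<epsilon> :: real and N :: nat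
  assumes "\<alpha> \<in> l2" and "\<epsilon> > 0" and "N \<ge> 1"
    and "eLseq \<alpha> \<epsilon> N < \<infinity>"
  shows "approx_num (R_op \<alpha>) N \<ge> ennreal (\<epsilon> / sqrt 2)"
proof -
  obtain c where c0: "c 0 = 0" and cm: "\<forall>m<N. c m < c (Suc m) \<and> LI \<alpha> (c m) (c (Suc m) - 1) > \<epsilon>"
    using eLseq_props[OF assms(4)] by blast
  have cmono: "\<forall>m<N. c m < c (Suc m)" using cm by blast
  define C where "C = c N"
  have ivl: "{c j..c (Suc j) - 1} = {c j..<c (Suc j)}" if "j < N" for j
    using cmono[rule_format, OF that] by auto
  have "\<forall>j<N. \<exists>f. (\<forall>k. k \<notin> {c j..<c (Suc j)} \<longrightarrow> f k = 0) \<and> (\<Sum>k\<in>{c j..<c (Suc j)}. (cmod (f k))\<^sup>2) \<le> 1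
     \<and> lI \<alpha> (c j) (c (Suc j) - 1) f > \<epsilon>\<^sup>2 * mu \<alpha> (c j) (c (Suc j) - 1) \<and> mu \<alpha> (c j) (c (Suc j) - 1) > 0"
    using choose_f[OF _ assms(2)] cm ivl by metis
  then obtain fs where fs: "\<forall>j<N. (\<forall>k. k \<notin> {c j..<c (Suc j)} \<longrightarrow> fs j k = 0) \<and> (\<Sum>k\<in>{c j..<c (Suc j)}. (cmod (fs j k))\<^sup>2) \<le> 1
     \<and> lI \<alpha> (c j) (c (Suc j) - 1) (fs j) > \<epsilon>\<^sup>2 * mu \<alpha> (c j) (c (Suc j) - 1) \<and> mu \<alpha> (c j) (c (Suc j) - 1) > 0"
    by metis
  define F where "F d = (\<lambda>k. \<Sum>i<N. d i * fs i k)" for d :: "nat \<Rightarrow> complex"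
  have F_on: "F d k = d j * fs j k" if "j < N" "k \<in> {c j..<c (Suc j)}" for d j k
  proof -
    have z: "fs i k = 0" if "i \<in> {..<N} - {j}" for i
    proof -
      have "k \<notin> {c i..<c (Suc i)}"
      proof (cases "i < j")
        case True then have "c (Suc i) \<le> c j" using mono_steps[OF cmono, of i j] \<open>j < N\<close> by simp
        then show ?thesis using \<open>k \<in> {c j..<c (Suc j)}\<close> by auto
      next
        case False then have "j < i" "i < N" using that by auto
        then have "c (Suc j) \<le> c i" using mono_steps[OF cmono, of j i] by simp
        then show ?thesis using \<open>k \<in> {c j..<c (Suc j)}\<close> by auto
      qed
      then show ?thesis using fs that by auto
    qed
    have "F d k = d j * fs j k + (\<Sum>i\<in>{..<N} - {j}. d i * fs i k)"
      unfolding F_def using that by (simp add: sum.remove)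
    also have "(\<Sum>i\<in>{..<N} - {j}. d i * fs i k) = 0" using z by simp
    finally show ?thesis by simp
  qed
  have F_out: "F d k = 0" if "k \<ge> C" for d k
  proof -
    have "fs i k = 0" if "i < N" for i
    proof -
      have "c (Suc i) \<le> C" unfolding C_def using mono_steps[OF cmono, of i N] that by simp
      then show ?thesis using fs \<open>k \<ge> C\<close> that by auto
    qed
    then show ?thesis unfolding F_def by simp
  qed
  have fs_l2: "fs i \<in> l2" if "i < N" for i
    unfolding l2_def mem_Collect_eq by (rule summable_finite[of "{c i..<c (Suc i)}"]) (use fs that in auto)
  have fs_pos: "(\<Sum>k\<in>{c j..<c (Suc j)}. (cmod (fs j k))\<^sup>2) > 0" if "j < N" for j
  proof (rule ccontr)
    assume "\<not> ?thesis"
    then have "(\<Sum>k\<in>{c j..<c (Suc j)}. (cmod (fs j k))\<^sup>2) = 0"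
      by (metis (no_types, lifting) linorder_not_less order_antisym sum_nonneg zero_le_power2)
    then have "\<forall>k\<in>{c j..<c (Suc j)}. fs j k = 0" by (simp add: sum_nonneg_eq_0_iff)
    then have "lI \<alpha> (c j) (c (Suc j) - 1) (fs j) = (cmod 0)\<^sup>2 * lI \<alpha> (c j) (c (Suc j) - 1) (fs j)"
      by (intro lI_scale) (use ivl that in auto)
    then have "lI \<alpha> (c j) (c (Suc j) - 1) (fs j) = 0" by simp
    moreover have "\<epsilon>\<^sup>2 * mu \<alpha> (c j) (c (Suc j) - 1) > 0" using fs that assms(2) by simp
    ultimately show False using fs that by auto
  qed
  have blocks: "(\<Sum>k<C. h k) = (\<Sum>j<N. \<Sum>k\<in>{c j..<c (Suc j)}. h k)" for h :: "nat \<Rightarrow> real"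
    using sum_blocks[OF cmono, of h] c0 unfolding C_def by (simp add: atLeast0LessThan)
  have bound: "\<epsilon>\<^sup>2 / 2 * (\<Sum>k<C. (cmod (F d k))\<^sup>2) \<le> (\<Sum>k<C. (cmod (R_op \<alpha> (F d) k))\<^sup>2)" for d
  proof -
    have per: "\<epsilon>\<^sup>2 / 2 * (\<Sum>k\<in>{c j..<c (Suc j)}. (cmod (F d k))\<^sup>2) \<le> (\<Sum>k\<in>{c j..<c (Suc j)}. (cmod (R_op \<alpha> (F d) k))\<^sup>2)"
      if j: "j < N" for j
    proof -
      define a b where "a = c j" and "b = c (Suc j) - 1"
      have I: "{a..b} = {c j..<c (Suc j)}" using ivl j a_def b_def by simp
      define X where "X = (\<Sum>k\<in>{c j..<c (Suc j)}. (cmod (R_op \<alpha> (F d) k))\<^sup>2)"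
      define \<mu> where "\<mu> = mu \<alpha> a b"
      have mup: "\<mu> > 0" and lf: "lI \<alpha> a b (fs j) > \<epsilon>\<^sup>2 * \<mu>" using fs j unfolding a_def b_def \<mu>_def by auto
      have "lI \<alpha> a b (F d) = (cmod (d j))\<^sup>2 * lI \<alpha> a b (fs j)"
        by (rule lI_scale) (use F_on j I in auto)
      moreover have "lI \<alpha> a b (F d) \<le> 2 * \<mu> * X" using lI_bound[of \<alpha> a b "F d"] I unfolding X_def \<mu>_def by simp
      ultimately have "(cmod (d j))\<^sup>2 * lI \<alpha> a b (fs j) \<le> 2 * \<mu> * X" by simp
      moreover have "(cmod (d j))\<^sup>2 * (\<epsilon>\<^sup>2 * \<mu>) \<le> (cmod (d j))\<^sup>2 * lI \<alpha> a b (fs j)"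
        using lf by (intro mult_left_mono) auto
      ultimately have "\<mu> * ((cmod (d j))\<^sup>2 * \<epsilon>\<^sup>2) \<le> \<mu> * (2 * X)" by (simp add: algebra_simps)
      then have k1: "(cmod (d j))\<^sup>2 * \<epsilon>\<^sup>2 \<le> 2 * X" using mup by simp
      have "(\<Sum>k\<in>{c j..<c (Suc j)}. (cmod (F d k))\<^sup>2) = (cmod (d j))\<^sup>2 * (\<Sum>k\<in>{c j..<c (Suc j)}. (cmod (fs j k))\<^sup>2)"
        using F_on[OF j] by (simp add: sum_distrib_left norm_mult power_mult_distrib)
      also have "\<dots> \<le> (cmod (d j))\<^sup>2" using fs j by (simp add: mult_left_le)
      finally have "(\<Sum>k\<in>{c j..<c (Suc j)}. (cmod (F d k))\<^sup>2) \<le> (cmod (d j))\<^sup>2" .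
      then have "\<epsilon>\<^sup>2 / 2 * (\<Sum>k\<in>{c j..<c (Suc j)}. (cmod (F d k))\<^sup>2) \<le> \<epsilon>\<^sup>2 / 2 * (cmod (d j))\<^sup>2"
        by (intro mult_left_mono) auto
      also have "\<dots> \<le> X" using k1 by (simp add: algebra_simps)
      finally show ?thesis unfolding X_def .
    qed
    have "\<epsilon>\<^sup>2 / 2 * (\<Sum>k<C. (cmod (F d k))\<^sup>2) = (\<Sum>j<N. \<epsilon>\<^sup>2 / 2 * (\<Sum>k\<in>{c j..<c (Suc j)}. (cmod (F d k))\<^sup>2))"
      by (simp add: blocks sum_distrib_left)
    also have "\<dots> \<le> (\<Sum>j<N. (\<Sum>k\<in>{c j..<c (Suc j)}. (cmod (R_op \<alpha> (F d) k))\<^sup>2))"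
      by (intro sum_mono per) simp
    also have "\<dots> = (\<Sum>k<C. (cmod (R_op \<alpha> (F d) k))\<^sup>2)" by (simp add: blocks)
    finally show ?thesis .
  qed
  show ?thesis
    unfolding approx_num_def
  proof (rule INF_greatest)
    fix P assume "P \<in> {P. linear_l2 P \<and> rank_le P (N - 1)}"
    then have linP: "linear_l2 P" and rk: "rank_le P (N - 1)" by auto
    obtain g where g: "\<forall>f\<in>l2. \<exists>cc. P f = (\<lambda>k. \<Sum>m<N-1. cc m * g m k)"
      using rk unfolding rank_le_def by blast
    have "\<forall>i<N. \<exists>cc. P (fs i) = (\<lambda>k. \<Sum>m<N-1. cc m * g m k)" using g fs_l2 by blast
    then obtain a where a: "\<forall>i<N. P (fs i) = (\<lambda>k. \<Sum>m<N-1. a i m * g m k)" by metis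
    obtain d where d: "\<exists>i\<in>{..<N}. d i \<noteq> 0" "\<forall>m<N-1. (\<Sum>i\<in>{..<N}. d i * a i m) = 0"
      using exists_kernel[of "{..<N}" "N - 1" a] assms(3) by auto
    define \<sigma> where "\<sigma> = (\<Sum>k<C. (cmod (F d k))\<^sup>2)"
    have \<sigma>pos: "\<sigma> > 0"
    proof -
      obtain i where i: "i < N" "d i \<noteq> 0" using d by auto
      have "0 < (cmod (d i))\<^sup>2 * (\<Sum>k\<in>{c i..<c (Suc i)}. (cmod (fs i k))\<^sup>2)"
        using i fs_pos by simp
      also have "\<dots> = (\<Sum>k\<in>{c i..<c (Suc i)}. (cmod (F d k))\<^sup>2)"
        using F_on[OF i(1)] by (simp add: sum_distrib_left norm_mult power_mult_distrib)
      also have "\<dots> \<le> (\<Sum>j<N. \<Sum>k\<in>{c j..<c (Suc j)}. (cmod (F d k))\<^sup>2)"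
        using i(1) by (intro member_le_sum) (auto intro: sum_nonneg)
      also have "\<dots> = \<sigma>" unfolding \<sigma>_def blocks ..
      finally show ?thesis .
    qed
    define s where "s = sqrt \<sigma>"
    have spos: "s > 0" using \<sigma>pos s_def by simp
    define d' where "d' i = d i / complex_of_real s" for i
    have Fd': "F d' k = F d k / complex_of_real s" for k
      unfolding F_def d'_def by (simp add: sum_divide_distrib)
    have norm1: "(\<Sum>k<C. (cmod (F d' k))\<^sup>2) = 1"
    proof -
      have "(\<Sum>k<C. (cmod (F d' k))\<^sup>2) = (\<Sum>k<C. (cmod (F d k))\<^sup>2) / s\<^sup>2"
        unfolding Fd' using spos by (simp add: norm_divide power_divide sum_divide_distrib)
      also have "\<dots> = 1" using \<sigma>pos unfolding s_def \<sigma>_def by simp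
      finally show ?thesis .
    qed
    have ker': "(\<Sum>i\<in>{..<N}. d' i * a i m) = 0" if "m < N - 1" for m
    proof -
      have "(\<Sum>i\<in>{..<N}. d' i * a i m) = (\<Sum>i\<in>{..<N}. d i * a i m) / complex_of_real s"
        unfolding d'_def by (simp add: sum_divide_distrib)
      then show ?thesis using d(2) that by simp
    qed
    have PF: "P (F d') = (\<lambda>k. 0)"
    proof -
      have "P (F d') = (\<lambda>k. \<Sum>i<N. d' i * P (fs i) k)"
        unfolding F_def by (rule lin_sum[OF linP]) (use fs_l2 in auto)
      also have "\<dots> = (\<lambda>k. \<Sum>i<N. d' i * (\<Sum>m<N-1. a i m * g m k))"
        using a by simp
      also have "\<dots> = (\<lambda>k. \<Sum>m<N-1. (\<Sum>i<N. d' i * a i m) * g m k)"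
        by (simp add: sum_distrib_left sum_distrib_right sum.swap[of _ "{..<N}"] mult.assoc)
      also have "\<dots> = (\<lambda>k. 0)" using ker' by simp
      finally show ?thesis .
    qed
    have Fl2: "F d' \<in> l2" unfolding F_def by (rule l2_sum) (use fs_l2 in auto)
    have Fn: "l2norm (F d') \<le> 1"
      unfolding l2norm_def
    proof (rule SUP_least)
      fix n
      have "(\<Sum>k<n. (cmod (F d' k))\<^sup>2) \<le> (\<Sum>k<C. (cmod (F d' k))\<^sup>2)"
        by (rule sum_le_tail) (auto simp: F_out)
      then have "sqrt (\<Sum>k<n. (cmod (F d' k))\<^sup>2) \<le> 1" using norm1 by simp
      then show "ennreal (sqrt (\<Sum>k<n. (cmod (F d' k))\<^sup>2)) \<le> 1" by (simp add: ennreal_leI)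
    qed
    have "ennreal (\<epsilon> / sqrt 2) = ennreal (sqrt (\<epsilon>\<^sup>2 / 2))"
      using assms(2) by (simp add: real_sqrt_divide)
    also have "\<dots> \<le> ennreal (sqrt (\<Sum>k<C. (cmod (R_op \<alpha> (F d') k))\<^sup>2))"
      using bound[of d'] norm1 by (intro ennreal_leI) simp
    also have "\<dots> \<le> l2norm (\<lambda>k. R_op \<alpha> (F d') k - P (F d') k)"
      unfolding l2norm_def PF by (rule SUP_upper2[of C]) simp_all
    also have "\<dots> \<le> opnorm (\<lambda>f k. R_op \<alpha> f k - P f k)"
      unfolding opnorm_def by (rule SUP_upper2[of "F d'"]) (use Fl2 Fn in simp_all)
    finally show "ennreal (\<epsilon> / sqrt 2) \<le> opnorm (\<lambda>f k. R_op \<alpha> f k - P f k)" .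
  qed
qed

end
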